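(* Let $q$ be odd, $G=\Omega_{2m+1}(q)$ with natural module $V$, and let $g\in G$ be regular semisimple. Then $g$ centralizes a nondegenerate $1$-space and $\dim C_V(g)=1$. Moreover, either $g$ stabilizes no other nondegenerate $1$-space, or $g$ acts as $-1$ on a nondegenerate $2$-space and stabilizes no other nondegenerate $1$-space.
   Context: $\Omega_{2m+1}(q)$ is the derived subgroup (of index $2$) of $\mathrm{SO}_{2m+1}(q)$ acting on a $(2m+1)$-dimensional $\mathbb F_q$-space with nondegenerate quadratic form. An element is regular semisimple if it is semisimple and its centralizer in the ambient algebraic group has connected component a maximal torus; equivalently it commutes with no nontrivial unipotent element. *)

theory Defs
  imports "HOL-Analysis.Analysis" "HOL-Algebra.Algebraic_Closure_Type"
begin

text \<open>Quadratic forms on the coordinate space 'a^'n, given by a coefficient matrix A: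
  Q(v) = sum_{i,j} A_ij v_i v_j (every quadratic form has this shape).\<close>

definition quad :: "'a::comm_ring_1^'n^'n \<Rightarrow> 'a^'n \<Rightarrow> 'a" where
  "quad A v = (\<Sum>i\<in>UNIV. \<Sum>j\<in>UNIV. A$i$j * v$i * v$j)"

definition polar :: "'a::comm_ring_1^'n^'n \<Rightarrow> 'a^'n \<Rightarrow> 'a^'n \<Rightarrow> 'a" where
  "polar A u v = quad A (u + v) - quad A u - quad A v"

definition nondegenerate_form :: "'a::comm_ring_1^'n^'n \<Rightarrow> bool" where
  "nondegenerate_form A \<longleftrightarrow> (\<forall>u. (\<forall>v. polar A u v = 0) \<longrightarrow> u = 0)"

definition nondeg_subspace :: "'a::field^'n^'n \<Rightarrow> ('a^'n) set \<Rightarrow> bool" where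
  "nondeg_subspace A U \<longleftrightarrow> vec.subspace U \<and>
     (\<forall>u\<in>U. (\<forall>v\<in>U. polar A u v = 0) \<longrightarrow> u = 0)"

definition SO :: "'a::comm_ring_1^'n^'n \<Rightarrow> ('a^'n^'n) set" where
  "SO A = {g. det g = 1 \<and> (\<forall>v. quad A (g *v v) = quad A v)}"

text \<open>Omega = derived subgroup of SO: the subgroup generated by all commutators
  (identity, commutators, closed under products; inverses of commutators are commutators).\<close>
inductive_set Omega :: "'a::field^'n^'n \<Rightarrow> ('a^'n^'n) set" for A where
  one: "mat 1 \<in> Omega A"
| comm: "g \<in> SO A \<Longrightarrow> h \<in> SO A \<Longrightarrow>
          g ** h ** matrix_inv g ** matrix_inv h \<in> Omega A"
| mult: "x \<in> Omega A \<Longrightarrow> y \<in> Omega A \<Longrightarrow> x ** y \<in> Omega A"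

definition lift_mat :: "'a::field^'n^'n \<Rightarrow> 'a alg_closure^'n^'n" where
  "lift_mat M = (\<chi> i j. to_ac (M$i$j))"

definition unipotent :: "'a::comm_ring_1^'n^'n \<Rightarrow> bool" where
  "unipotent u \<longleftrightarrow> (\<exists>k. (((**) (u - mat 1)) ^^ k) (mat 1) = 0)"

definition diagonal_mat :: "'a::zero^'n^'n \<Rightarrow> bool" where
  "diagonal_mat D \<longleftrightarrow> (\<forall>i j. i \<noteq> j \<longrightarrow> D$i$j = 0)"

definition semisimple :: "'a::field^'n^'n \<Rightarrow> bool" where
  "semisimple g \<longleftrightarrow> (\<exists>(P::'a alg_closure^'n^'n) (D::'a alg_closure^'n^'n). invertible P \<and> diagonal_mat D \<and>
      lift_mat g = P ** D ** matrix_inv P)"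

definition regular_semisimple :: "'a::field^'n^'n \<Rightarrow> 'a^'n^'n \<Rightarrow> bool" where
  "regular_semisimple A g \<longleftrightarrow> semisimple g \<and>
     (\<forall>u \<in> SO (lift_mat A). unipotent u \<and> u ** lift_mat g = lift_mat g ** u \<longrightarrow> u = mat 1)"

definition fixed_space :: "'a::field^'n^'n \<Rightarrow> ('a^'n) set" where
  "fixed_space g = {v. g *v v = v}"

end

theory Submission
  imports Defs
begin

no_notation Formal_Power_Series.fps_nth (infixl "$" 75)


definition bf :: "'k::comm_ring_1^'n^'n \<Rightarrow> 'k^'n \<Rightarrow> 'k^'n \<Rightarrow> 'k" where
  "bf M u v = (\<Sum>i\<in>UNIV. u$i * (M *v v)$i)"

lemma sum_mv_transpose:
  fixes R :: "'k::comm_ring_1^'n^'n"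
  shows "(\<Sum>i\<in>UNIV. (R *v u)$i * w$i) = (\<Sum>i\<in>UNIV. u$i * (transpose R *v w)$i)"
proof -
  have "(\<Sum>i\<in>UNIV. (R *v u)$i * w$i) = (\<Sum>i\<in>UNIV. \<Sum>j\<in>UNIV. R$i$j * u$j * w$i)"
    unfolding matrix_vector_mult_def by (simp add: sum_distrib_right)
  also have "\<dots> = (\<Sum>j\<in>UNIV. \<Sum>i\<in>UNIV. R$i$j * u$j * w$i)" by (rule sum.swap)
  also have "\<dots> = (\<Sum>i\<in>UNIV. u$i * (transpose R *v w)$i)"
    unfolding matrix_vector_mult_def transpose_def by (simp add: sum_distrib_left mult_ac)
  finally show ?thesis .
qed

lemma bf_mult:
  fixes R M :: "'k::comm_ring_1^'n^'n"
  shows "bf M (R *v u) (R *v v) = bf (transpose R ** M ** R) u v"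
  unfolding bf_def sum_mv_transpose by (simp add: matrix_vector_mul_assoc matrix_mul_assoc)

lemma polar_bf:
  fixes A :: "'k::comm_ring_1^'n^'n"
  shows "polar A u v = bf (A + transpose A) u v"
proof -
  have "polar A u v = (\<Sum>i\<in>UNIV. \<Sum>j\<in>UNIV. A$i$j * u$i * v$j) + (\<Sum>i\<in>UNIV. \<Sum>j\<in>UNIV. A$i$j * v$i * u$j)"
    unfolding polar_def quad_def by (simp add: algebra_simps sum.distrib sum_subtractf)
  also have "(\<Sum>i\<in>UNIV. \<Sum>j\<in>UNIV. A$i$j * v$i * u$j) = (\<Sum>j\<in>UNIV. \<Sum>i\<in>UNIV. A$i$j * v$i * u$j)"
    by (rule sum.swap)
  also have "(\<Sum>i\<in>UNIV. \<Sum>j\<in>UNIV. A$i$j * u$i * v$j) + (\<Sum>j\<in>UNIV. \<Sum>i\<in>UNIV. A$i$j * v$i * u$j)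
     = bf (A + transpose A) u v"
    unfolding bf_def matrix_vector_mult_def transpose_def by (simp add: algebra_simps sum.distrib sum_distrib_left)
  finally show ?thesis .
qed

lemma polar_self:
  fixes A :: "'k::comm_ring_1^'n^'n"
  shows "polar A v v = 2 * quad A v"
  unfolding polar_def quad_def
  by (simp add: algebra_simps sum.distrib sum_distrib_left)

lemma mv_axis: "((M::'k::comm_ring_1^'n^'m) *v axis j 1) $ i = M$i$j"
  unfolding matrix_vector_mult_def axis_def by (simp add: if_distrib[of "\<lambda>x. _ * x"] cong: if_cong)

lemma bf_axis:
  fixes M :: "'k::comm_ring_1^'n^'n"
  shows "bf M (axis i 1) (axis j 1) = M$i$j"
  unfolding bf_def mv_axis unfolding axis_def by (simp add: if_distrib[of "\<lambda>x. x * _"] cong: if_cong)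

lemma bf_eq_imp_eq:
  fixes M N :: "'k::comm_ring_1^'n^'n"
  assumes "\<And>u v. bf M u v = bf N u v"
  shows "M = N"
  using assms bf_axis by (metis vec_eq_iff)

lemma bf_sym:
  fixes M :: "'k::comm_ring_1^'n^'n"
  assumes "transpose M = M"
  shows "bf M u v = bf M v u"
proof -
  have "bf M u v = (\<Sum>i\<in>UNIV. (M *v u)$i * v$i)"
    unfolding bf_def using sum_mv_transpose[of M u v] assms by (simp add: mult.commute)
  thus ?thesis unfolding bf_def by (simp add: mult.commute)
qed

lemma bf_add_left: "bf M (u + w) v = bf M u v + bf M w v"
  unfolding bf_def by (simp add: algebra_simps sum.distrib)
lemma bf_add_right: "bf M u (v + w) = bf M u v + bf M u w"
  unfolding bf_def by (simp add: algebra_simps sum.distrib matrix_vector_right_distrib)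
lemma bf_scale_left: "bf M (c *s u) v = c * bf M u v"
  unfolding bf_def by (simp add: algebra_simps sum_distrib_left)
lemma bf_scale_right: "bf M u (c *s v) = c * bf M u v"
  unfolding bf_def matrix_vector_mult_def by (simp add: algebra_simps sum_distrib_left)
lemma bf_zero_left[simp]: "bf M 0 v = 0"
  unfolding bf_def by simp
lemma bf_zero_right[simp]: "bf M u 0 = 0"
  unfolding bf_def by simp
lemma bf_neg_left: "bf M (- u) v = - bf M u v"
  unfolding bf_def by (simp add: sum_negf)
lemma bf_neg_right: "bf M u (- v) = - bf M u v"
  unfolding bf_def matrix_vector_mult_def by (simp add: sum_negf)
lemma bf_diff_left: "bf M (u - w) v = bf M u v - bf M w v"
  using bf_add_left[of M u "-w" v] bf_neg_left by (metis diff_conv_add_uminus)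
lemma bf_diff_right: "bf M u (v - w) = bf M u v - bf M u w"
  using bf_add_right[of M u v "-w"] bf_neg_right by (metis diff_conv_add_uminus)

lemma matrix_inv_props:
  fixes A :: "'k::semiring_1^'n^'n"
  assumes "invertible A"
  shows "A ** matrix_inv A = mat 1" "matrix_inv A ** A = mat 1"
  using assms unfolding invertible_def matrix_inv_def by (metis (mono_tags, lifting) someI_ex)+

lemma card_even_involution:
  assumes "finite XX" "\<forall>x\<in>XX. h x \<in> XX \<and> h (h x) = x \<and> h x \<noteq> x" shows "even (card XX)"
  using assms
proof (induction "card XX" arbitrary: XX rule: less_induct)
  case less
  show ?case
  proof (cases "XX = {}")
    case True thus ?thesis by simp
  next
    case False
    then obtain x where x: "x \<in> XX" by blast
    let ?Y = "XX - {x, h x}"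
    have hy: "\<forall>y\<in>?Y. h y \<in> ?Y \<and> h (h y) = y \<and> h y \<noteq> y" using less.prems x by auto metis+
    have sub: "{x, h x} \<subseteq> XX" using less.prems x by auto
    have c2: "card {x, h x} = 2" using less.prems x by auto
    have cY: "card XX = card ?Y + 2"
      using card_Diff_subset[OF _ sub] less.prems(1) c2 card_mono[OF less.prems(1) sub] by (simp add: finite_subset)
    have "even (card ?Y)"
      by (rule less.hyps) (use cY less.prems hy in auto)
    thus ?thesis using cY by simp
  qed
qed

lemma two_ne_zero_odd:
  assumes "odd CARD('a::{finite,field})" shows "(2::'a) \<noteq> 0"
proof
  assume h2: "(2::'a) = 0"
  have "even (card (UNIV::'a set))"
  proof (rule card_even_involution[where h="\<lambda>x. x + 1"])
    show "\<forall>x\<in>UNIV. x + 1 \<in> (UNIV::'a set) \<and> x + 1 + 1 = x \<and> x + 1 \<noteq> x"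
      using h2 by (simp add: add.assoc)
  qed simp
  thus False using assms by simp
qed

definition liftv :: "'a::field^'n \<Rightarrow> 'a alg_closure^'n" where
  "liftv v = (\<chi> i. to_ac (v$i))"

lemma lift_mat_nth[simp]: "lift_mat M $ i $ j = to_ac (M$i$j)" by (simp add: lift_mat_def)
lemma liftv_nth[simp]: "liftv v $ i = to_ac (v$i)" by (simp add: liftv_def)

lemma lift_mat_mult: "lift_mat (M ** N) = lift_mat M ** lift_mat N"
  by (simp add: vec_eq_iff matrix_matrix_mult_def to_ac_sum)
lemma lift_mv: "lift_mat M *v liftv v = liftv (M *v v)"
  by (simp add: vec_eq_iff matrix_vector_mult_def to_ac_sum)
lemma lift_mat_add: "lift_mat (M + N) = lift_mat M + lift_mat N"
  by (simp add: vec_eq_iff)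
lemma lift_mat_diff: "lift_mat (M - N) = lift_mat M - lift_mat N"
  by (simp add: vec_eq_iff)
lemma lift_mat_transpose: "lift_mat (transpose M) = transpose (lift_mat M)"
  by (simp add: vec_eq_iff transpose_def)
lemma lift_mat_mat: "lift_mat (mat c) = mat (to_ac c)"
  by (simp add: vec_eq_iff mat_def)
lemma liftv_add: "liftv (u + v) = liftv u + liftv v" by (simp add: vec_eq_iff)
lemma liftv_scale: "liftv (c *s v) = to_ac c *s liftv v" by (simp add: vec_eq_iff)
lemma liftv_zero[simp]: "liftv 0 = 0" by (simp add: vec_eq_iff)
lemma liftv_eq_iff[simp]: "liftv u = liftv v \<longleftrightarrow> u = v" by (simp add: vec_eq_iff)
lemma liftv_eq_0_iff[simp]: "liftv u = 0 \<longleftrightarrow> u = 0"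
  using liftv_eq_iff[of u 0] by simp
lemma inj_liftv: "inj liftv" by (simp add: inj_on_def)

lemma det_lift: "det (lift_mat M) = to_ac (det M)"
  unfolding det_def by (simp add: to_ac_sum to_ac_prod)

lemma bf_lift: "bf (lift_mat M) (liftv u) (liftv v) = to_ac (bf M u v)"
  unfolding bf_def lift_mv by (simp add: to_ac_sum)

lemma quad_lift: "quad (lift_mat M) (liftv v) = to_ac (quad M v)"
  unfolding quad_def by (simp add: to_ac_sum)

lemma SO_invertible: "g \<in> SO A \<Longrightarrow> invertible (g::'k::field^'n^'n)"
  by (simp add: SO_def invertible_det_nz)

lemma SO_mult: "g \<in> SO A \<Longrightarrow> h \<in> SO A \<Longrightarrow> g ** h \<in> SO A"
  by (simp add: SO_def det_mul matrix_vector_mul_assoc[symmetric])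

lemma SO_inv:
  assumes g: "(g::'k::field^'n^'n) \<in> SO A" shows "matrix_inv g \<in> SO A"
proof -
  have inv: "g ** matrix_inv g = mat 1" "matrix_inv g ** g = mat 1"
    using matrix_inv_props SO_invertible[OF g] by blast+
  have "det g * det (matrix_inv g) = 1" using inv(1) by (metis det_I det_mul)
  hence d: "det (matrix_inv g) = 1" using g by (simp add: SO_def)
  have "quad A (matrix_inv g *v v) = quad A v" for v
  proof -
    have "quad A v = quad A (g *v (matrix_inv g *v v))"
      by (simp add: matrix_vector_mul_assoc inv)
    also have "\<dots> = quad A (matrix_inv g *v v)" using g by (simp add: SO_def)
    finally show ?thesis by simp
  qed
  thus ?thesis using d by (simp add: SO_def)
qed

lemma Omega_SO: "x \<in> Omega A \<Longrightarrow> x \<in> SO (A::'k::field^'n^'n)"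
proof (induction rule: Omega.induct)
  case one thus ?case by (simp add: SO_def)
next
  case (comm g h) thus ?case by (intro SO_mult SO_inv)
next
  case (mult x y) thus ?case by (simp add: SO_mult)
qed

lemma SO_orth:
  assumes g: "(g::'k::comm_ring_1^'n^'n) \<in> SO A"
  shows "transpose g ** (A + transpose A) ** g = A + transpose A"
proof (rule bf_eq_imp_eq)
  fix u v
  have "bf (transpose g ** (A + transpose A) ** g) u v = polar A (g *v u) (g *v v)"
    by (simp add: bf_mult polar_bf)
  also have "\<dots> = polar A u v"
    using g by (simp add: polar_def SO_def matrix_vector_right_distrib[symmetric])
  finally show "bf (transpose g ** (A + transpose A) ** g) u v = bf (A + transpose A) u v"
    by (simp add: polar_bf)
qed

lemma transpose_Bm: "transpose (A + transpose A) = A + transpose (A::'k::comm_ring_1^'n^'n)"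
  by (simp add: vec_eq_iff transpose_def)

lemma bf_eq_mv: "bf M v u = (\<Sum>i\<in>UNIV. (transpose M *v v)$i * u$i)"
  unfolding bf_def sum_mv_transpose by (simp add: mult.commute)

lemma invertible_of_ker:
  fixes M :: "'k::field^'n^'n"
  assumes "\<And>x. M *v x = 0 \<Longrightarrow> x = 0"
  shows "invertible M"
proof -
  have inj: "inj ((*v) M)"
  proof (rule injI)
    fix x y assume "M *v x = M *v y"
    hence "M *v (x - y) = 0" by (simp add: matrix_vector_mult_diff_distrib)
    thus "x = y" using assms[of "x - y"] by simp
  qed
  have "surj ((*v) M)" by (rule vec.linear_inj_imp_surj[OF matrix_vector_mul_linear_gen inj])
  thus ?thesis using inj invertible_eq_bij bij_def by blast
qed

lemma nondeg_invertible:
  assumes nd: "nondegenerate_form (A::'k::field^'n^'n)"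
  shows "invertible (A + transpose A)"
proof (rule invertible_of_ker)
  fix u assume u: "(A + transpose A) *v u = 0"
  have "polar A u v = 0" for v
    unfolding polar_bf bf_eq_mv transpose_Bm using u by simp
  thus "u = 0" using nd unfolding nondegenerate_form_def by blast
qed



lemma ker_subspace: "vec.subspace {x. (M::'k::field^'n^'m) *v x = 0}"
  unfolding vec.subspace_def
  by (simp add: matrix_vector_right_distrib vec.scale)

lemma card_basis_UNIV:
  assumes "vec.independent (B::('k::field^'n) set)" "UNIV \<subseteq> vec.span B"
  shows "card B = CARD('n)"
  using vec.basis_card_eq_dim[of B UNIV] assms by (simp add: card_cart_basis)

lemma rank_nullity_vec:
  fixes M :: "'k::field^'n^'m"
  shows "vec.dim {x. M *v x = 0} + vec.dim (range ((*v) M)) = CARD('n)"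
proof -
  let ?K = "{x. M *v x = 0}"
  obtain B0 where B0: "B0 \<subseteq> ?K" "vec.independent B0" "?K \<subseteq> vec.span B0" "card B0 = vec.dim ?K"
    by (rule vec.basis_exists[of ?K])
  obtain B where B: "B0 \<subseteq> B" "vec.independent B" "UNIV \<subseteq> vec.span B"
    by (rule vec.maximal_independent_subset_extend[of B0 UNIV]) (use B0(2) in auto)
  have finB: "finite B" using B(2) vec.finiteI_independent by blast
  have cB: "card B = CARD('n)" using card_basis_UNIV B(2,3) by blast
  let ?C = "B - B0"
  have indC: "vec.independent ?C" using B(2) vec.independent_mono by blast
  have cC: "card ?C = CARD('n) - card B0" using cB B(1) finB by (simp add: card_Diff_subset finite_subset)
  have dC: "vec.dim (vec.span ?C) = card ?C" using indC vec.dim_span_eq_card_independent by blast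
  have dB0: "vec.dim (vec.span B0) = card B0" using B0(2) vec.dim_span_eq_card_independent by blast
  have sums: "{x + y |x y. x \<in> vec.span ?C \<and> y \<in> vec.span B0} = UNIV"
  proof -
    have "vec.span (?C \<union> B0) = UNIV" using B(1,3) by (metis Un_Diff_cancel2 sup.absorb_iff1 top.extremum_uniqueI)
    thus ?thesis using vec.span_Un[of ?C B0] by simp
  qed
  have "vec.dim (UNIV::('k^'n) set) + vec.dim (vec.span ?C \<inter> vec.span B0) = card ?C + card B0"
    using vec.dim_sums_Int[of "vec.span ?C" "vec.span B0"] sums dC dB0 by simp
  hence "vec.dim (vec.span ?C \<inter> vec.span B0) = 0"
    using cC B(1) finB cB card_mono[OF finB B(1)] by (simp add: card_cart_basis)
  hence int0: "vec.span ?C \<inter> vec.span B0 \<subseteq> {0}" by simp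
  have Ksp: "?K = vec.span B0"
    using B0(1,3) vec.span_minimal[OF B0(1) ker_subspace] by blast
  have inj: "inj_on ((*v) M) (vec.span ?C)"
  proof (rule inj_onI)
    fix x y assume xy: "x \<in> vec.span ?C" "y \<in> vec.span ?C" "M *v x = M *v y"
    have "x - y \<in> vec.span ?C" using xy by (simp add: vec.span_diff)
    moreover have "x - y \<in> ?K" using xy by (simp add: matrix_vector_mult_diff_distrib)
    ultimately show "x = y" using int0 Ksp by auto
  qed
  have rng: "range ((*v) M) = (*v) M ` vec.span ?C"
  proof
    show "range ((*v) M) \<subseteq> (*v) M ` vec.span ?C"
    proof
      fix z assume "z \<in> range ((*v) M)"
      then obtain x where x: "z = M *v x" by blast
      obtain a b where ab: "x = a + b" "a \<in> vec.span ?C" "b \<in> vec.span B0" using sums by blast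
      have "M *v b = 0" using ab(3) Ksp by blast
      hence "z = M *v a" using x ab by (simp add: matrix_vector_right_distrib)
      thus "z \<in> (*v) M ` vec.span ?C" using ab by blast
    qed
  qed blast
  have "vec.dim (range ((*v) M)) = vec.dim (vec.span ?C)"
    unfolding rng by (rule vec.dim_image_eq[OF matrix_vector_mul_linear_gen]) (use inj in \<open>simp add: vec.span_span\<close>)
  thus ?thesis using dC cC B0(4) cB card_mono[OF finB B(1)] by simp
qed

lemma liftv_sum: "liftv (sum f T) = (\<Sum>x\<in>T. liftv (f x))"
  by (simp add: vec_eq_iff to_ac_sum sum_component)

lemma lift_independent:
  fixes S :: "('a::field^'n) set"
  assumes indS: "vec.independent S"
  shows "vec.independent (liftv ` S)"
proof -
  obtain B where B: "S \<subseteq> B" "vec.independent B" "UNIV \<subseteq> vec.span B"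
    by (rule vec.maximal_independent_subset_extend[of S UNIV]) (use indS in auto)
  have finB: "finite B" using B(2) vec.finiteI_independent by blast
  have cB: "card B = CARD('n)" using card_basis_UNIV B(2,3) by blast
  obtain h where h: "bij_betw h (UNIV::'n set) B"
    using finite_same_card_bij[of "UNIV::'n set" B] finB cB by auto
  define R :: "'a^'n^'n" where "R = (\<chi> i. h i)"
  have rowR: "row i R = h i" for i by (simp add: R_def row_def)
  have "\<forall>c. (\<Sum>i\<in>UNIV. c i *s row i R) = 0 \<longrightarrow> (\<forall>i. c i = 0)"
  proof (intro allI impI)
    fix c :: "'n \<Rightarrow> 'a" assume c: "(\<Sum>i\<in>UNIV. c i *s row i R) = 0"
    let ?c = "\<lambda>v. c (inv_into UNIV h v)"
    have "(\<Sum>v\<in>B. ?c v *s v) = (\<Sum>i\<in>UNIV. ?c (h i) *s h i)"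
      using sum.reindex_bij_betw[OF h, of "\<lambda>v. ?c v *s v"] by simp
    also have "\<dots> = (\<Sum>i\<in>UNIV. c i *s row i R)"
      using h by (simp add: rowR bij_betw_inv_into_left)
    finally have "(\<Sum>v\<in>B. ?c v *s v) = 0" using c by simp
    have ie: "\<forall>c. (\<Sum>v\<in>B. c v *s v) = 0 \<longrightarrow> (\<forall>v\<in>B. c v = 0)"
      using B(2) unfolding vec.independent_explicit by blast
    from ie[rule_format, OF \<open>(\<Sum>v\<in>B. ?c v *s v) = 0\<close>] have "\<forall>v\<in>B. ?c v = 0" by blast
    fix i
    have "h i \<in> B" using bij_betw_apply[OF h] by simp
    moreover have "inv_into UNIV h (h i) = i" using bij_betw_inv_into_left[OF h] by simp
    ultimately show "c i = 0" using \<open>\<forall>v\<in>B. ?c v = 0\<close> by metis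
  qed
  hence "\<exists>B. R ** B = mat 1" by (simp only: matrix_right_invertible_independent_rows)
  hence "invertible R" by (simp only: invertible_right_inverse)
  hence "det (lift_mat R) \<noteq> 0" by (simp add: det_lift invertible_det_nz)
  hence "invertible (lift_mat R)" by (simp add: invertible_det_nz)
  hence "\<exists>B. lift_mat R ** B = mat 1" by (simp only: invertible_right_inverse)
  hence indK: "\<forall>c. (\<Sum>i\<in>UNIV. c i *s row i (lift_mat R)) = 0 \<longrightarrow> (\<forall>i. c i = 0)"
    by (simp only: matrix_right_invertible_independent_rows)
  have rowL: "row i (lift_mat R) = liftv (h i)" for i
    by (simp add: vec_eq_iff row_def R_def)
  have finS: "finite S" using finB B(1) finite_subset by blast
  show ?thesis
    unfolding vec.independent_explicit
  proof (intro conjI allI impI ballI)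
    show "finite (liftv ` S)" using finS by simp
  next
    fix c w assume c: "(\<Sum>v\<in>liftv ` S. c v *s v) = 0" and w: "w \<in> liftv ` S"
    define c' where "c' i = (if h i \<in> S then c (liftv (h i)) else 0)" for i
    have injS: "inj_on (\<lambda>i. liftv (h i)) {i. h i \<in> S}"
      using h by (auto simp: inj_on_def bij_betw_def)
    have imS: "(\<lambda>i. liftv (h i)) ` {i. h i \<in> S} = liftv ` S"
    proof -
      have "h ` {i. h i \<in> S} = S" using h B(1) by (auto simp: bij_betw_def)
      thus ?thesis by (metis image_image)
    qed
    have "(\<Sum>i\<in>UNIV. c' i *s row i (lift_mat R)) = (\<Sum>i\<in>{i. h i \<in> S}. c (liftv (h i)) *s liftv (h i))"
      by (rule sum.mono_neutral_cong_right) (auto simp: c'_def rowL)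
    also have "\<dots> = (\<Sum>v\<in>liftv ` S. c v *s v)"
      using sum.reindex[OF injS, of "\<lambda>v. c v *s v"] imS by simp
    finally have "\<forall>i. c' i = 0" using indK c by simp
    moreover obtain s where s: "s \<in> S" "w = liftv s" using w by blast
    moreover obtain i where "h i = s" using h s B(1) by (metis bij_betw_def imageE subsetD)
    ultimately show "c w = 0" by (metis c'_def)
  qed
qed

lemma liftv_span:
  assumes "y \<in> vec.span S"
  shows "liftv y \<in> vec.span (liftv ` S)"
proof -
  obtain T r where Tr: "finite T" "T \<subseteq> S" "y = (\<Sum>a\<in>T. r a *s a)"
    using assms unfolding vec.span_explicit by blast
  have "liftv y = (\<Sum>a\<in>T. to_ac (r a) *s liftv a)" using Tr by (simp add: liftv_sum liftv_scale)
  also have "\<dots> \<in> vec.span (liftv ` S)"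
    using Tr by (intro vec.span_sum vec.span_scale vec.span_base) auto
  finally show ?thesis .
qed

lemma dim_ker_lift:
  fixes M :: "'a::field^'n^'n"
  shows "vec.dim {x. lift_mat M *v x = 0} = vec.dim {x. M *v x = 0}"
proof -
  obtain Br where Br: "Br \<subseteq> range ((*v) M)" "vec.independent Br" "range ((*v) M) \<subseteq> vec.span Br"
    "card Br = vec.dim (range ((*v) M))"
    by (rule vec.basis_exists)
  have finBr: "finite Br" using Br(2) vec.finiteI_independent by blast
  have ge: "vec.dim (range ((*v) (lift_mat M))) \<ge> vec.dim (range ((*v) M))"
  proof -
    have "liftv ` Br \<subseteq> range ((*v) (lift_mat M))"
      using Br(1) by (auto simp: lift_mv[symmetric])
    moreover have "vec.independent (liftv ` Br)" using lift_independent Br(2) by blast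
    ultimately have "card (liftv ` Br) \<le> vec.dim (range ((*v) (lift_mat M)))"
      by (rule vec.independent_card_le_dim)
    moreover have "card (liftv ` Br) = card Br" using inj_liftv card_image by (metis inj_on_subset subset_UNIV)
    ultimately show ?thesis using Br(4) by simp
  qed
  have le: "vec.dim (range ((*v) (lift_mat M))) \<le> vec.dim (range ((*v) M))"
  proof -
    have "range ((*v) (lift_mat M)) \<subseteq> vec.span (liftv ` Br)"
    proof
      fix z assume "z \<in> range ((*v) (lift_mat M))"
      then obtain x where x: "z = lift_mat M *v x" by blast
      have colL: "column j (lift_mat M) = liftv (M *v axis j 1)" for j
        by (simp add: vec_eq_iff column_def mv_axis)
      have "z = (\<Sum>j\<in>UNIV. x$j *s liftv (M *v axis j 1))"
        unfolding x matrix_mult_sum colL ..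
      also have "\<dots> \<in> vec.span (liftv ` Br)"
      proof (intro vec.span_sum vec.span_scale)
        fix j
        have "M *v axis j 1 \<in> vec.span Br" using Br(3) by blast
        thus "liftv (M *v axis j 1) \<in> vec.span (liftv ` Br)" by (rule liftv_span)
      qed
      finally show "z \<in> vec.span (liftv ` Br)" .
    qed
    hence "vec.dim (range ((*v) (lift_mat M))) \<le> card (liftv ` Br)"
      using finBr by (intro vec.dim_le_card) auto
    also have "\<dots> \<le> card Br" using finBr card_image_le by blast
    finally show ?thesis using Br(4) by simp
  qed
  show ?thesis using rank_nullity_vec[of M] rank_nullity_vec[of "lift_mat M"] ge le by simp
qed



definition Zs :: "'n set \<Rightarrow> ('k::field^'n) set" where
  "Zs S = {y. \<forall>i. i \<notin> S \<longrightarrow> y$i = 0}"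

definition eig :: "'k::field^'n^'n \<Rightarrow> 'k \<Rightarrow> ('k^'n) set" where
  "eig M c = {x. M *v x = c *s x}"

lemma axis_in_Zs: "i \<in> S \<Longrightarrow> axis i 1 \<in> Zs S"
  by (simp add: Zs_def axis_def)

lemma dim_Zs: "vec.dim (Zs S :: ('k::field^'n) set) = card S"
proof -
  let ?A = "(\<lambda>i. axis i (1::'k)) ` S"
  have ind: "vec.independent ?A"
    by (rule vec.independent_mono[OF independent_cart_basis]) (auto simp: cart_basis_def)
  have sub: "?A \<subseteq> Zs S" using axis_in_Zs by blast
  have sp: "Zs S \<subseteq> vec.span ?A"
  proof
    fix y :: "'k^'n" assume y: "y \<in> Zs S"
    have "y = (\<Sum>i\<in>S. y$i *s axis i 1)"
    proof (subst vec_eq_iff, intro allI)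
      fix j
      have "(\<Sum>i\<in>S. y$i *s axis i (1::'k)) $ j = (\<Sum>i\<in>S. if i = j then y$j else 0)"
        unfolding sum_component by (rule sum.cong) (auto simp: axis_def)
      also have "\<dots> = y$j" using y by (simp add: Zs_def)
      finally show "y$j = (\<Sum>i\<in>S. y$i *s axis i (1::'k)) $ j" by simp
    qed
    also have "\<dots> \<in> vec.span ?A" by (intro vec.span_sum vec.span_scale vec.span_base) auto
    finally show "y \<in> vec.span ?A" .
  qed
  have "card ?A = card S" by (rule card_image) (auto simp: inj_on_def axis_eq_axis)
  thus ?thesis using vec.basis_card_eq_dim[OF sub sp ind] by simp
qed

lemma Zs_subspace: "vec.subspace (Zs S :: ('k::field^'n) set)"
  unfolding vec.subspace_def Zs_def by simp

lemma diag_mv: "diagonal_mat D \<Longrightarrow> (D *v y)$i = D$i$i * y$i"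
proof -
  assume d: "diagonal_mat D"
  have "(D *v y)$i = (\<Sum>k\<in>UNIV. D$i$k * y$k)" by (simp add: matrix_vector_mult_def)
  also have "\<dots> = (\<Sum>k\<in>UNIV. if k = i then D$i$i * y$i else 0)"
    by (rule sum.cong) (use d in \<open>auto simp: diagonal_mat_def\<close>)
  also have "\<dots> = D$i$i * y$i" by simp
  finally show ?thesis .
qed

lemma diag_mm_left: "diagonal_mat D \<Longrightarrow> (D ** Y)$i$j = D$i$i * Y$i$j"
proof -
  assume d: "diagonal_mat D"
  have "(D ** Y)$i$j = (\<Sum>k\<in>UNIV. D$i$k * Y$k$j)" by (simp add: matrix_matrix_mult_def)
  also have "\<dots> = (\<Sum>k\<in>UNIV. if k = i then D$i$i * Y$i$j else 0)"
    by (rule sum.cong) (use d in \<open>auto simp: diagonal_mat_def\<close>)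
  also have "\<dots> = D$i$i * Y$i$j" by simp
  finally show ?thesis .
qed

lemma diag_mm_right: "diagonal_mat D \<Longrightarrow> (Y ** D)$i$j = Y$i$j * D$j$j"
proof -
  assume d: "diagonal_mat D"
  have "(Y ** D)$i$j = (\<Sum>k\<in>UNIV. Y$i$k * D$k$j)" by (simp add: matrix_matrix_mult_def)
  also have "\<dots> = (\<Sum>k\<in>UNIV. if k = j then Y$i$j * D$j$j else 0)"
    by (rule sum.cong) (use d in \<open>auto simp: diagonal_mat_def\<close>)
  also have "\<dots> = Y$i$j * D$j$j" by simp
  finally show ?thesis .
qed

lemma diag_transpose: "diagonal_mat D \<Longrightarrow> transpose D = D"
  unfolding diagonal_mat_def transpose_def vec_eq_iff by (metis vec_lambda_beta)

lemma invertible_transpose_gen: "invertible (A::'k::field^'n^'n) \<Longrightarrow> invertible (transpose A)"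
  by (simp add: invertible_det_nz)

lemma eig_diag: "diagonal_mat D \<Longrightarrow> eig D c = Zs {i. D$i$i = c}"
  by (auto simp: eig_def Zs_def vec_eq_iff diag_mv)

lemma eig_conj:
  fixes P D :: "'k::field^'n^'n"
  assumes P: "invertible P"
  shows "eig (P ** D ** matrix_inv P) c = (*v) P ` eig D c"
proof -
  have PPi: "P ** matrix_inv P = mat 1" "matrix_inv P ** P = mat 1" using matrix_inv_props[OF P] by auto
  have as1: "matrix_inv P ** (P ** Y) = Y" "P ** (matrix_inv P ** Y) = Y" for Y :: "'k^'n^'n"
    by (metis matrix_mul_assoc PPi matrix_mul_lid)+
  show ?thesis
  proof
    show "eig (P ** D ** matrix_inv P) c \<subseteq> (*v) P ` eig D c"
    proof
      fix x assume x: "x \<in> eig (P ** D ** matrix_inv P) c"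
      let ?y = "matrix_inv P *v x"
      have "x = P *v ?y" by (simp add: matrix_vector_mul_assoc PPi)
      moreover have "D *v ?y = c *s ?y"
      proof -
        have "D *v ?y = matrix_inv P *v ((P ** D ** matrix_inv P) *v x)"
          by (metis matrix_vector_mul_assoc matrix_mul_assoc as1(1))
        also have "\<dots> = c *s ?y" using x by (simp add: eig_def vec.scale)
        finally show ?thesis .
      qed
      ultimately show "x \<in> (*v) P ` eig D c" by (auto simp: eig_def)
    qed
  next
    show "(*v) P ` eig D c \<subseteq> eig (P ** D ** matrix_inv P) c"
    proof
      fix x assume "x \<in> (*v) P ` eig D c"
      then obtain y where y: "x = P *v y" "D *v y = c *s y" by (auto simp: eig_def)
      have e1: "matrix_inv P *v (P *v y) = y" by (simp add: matrix_vector_mul_assoc PPi)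
      have "(P ** D ** matrix_inv P) *v x = (P ** D) *v (matrix_inv P *v (P *v y))"
        unfolding y(1) by (simp only: matrix_vector_mul_assoc matrix_mul_assoc)
      also have "\<dots> = P *v (D *v y)" unfolding e1 by (simp only: matrix_vector_mul_assoc)
      finally have "(P ** D ** matrix_inv P) *v x = P *v (D *v y)" .
      thus "x \<in> eig (P ** D ** matrix_inv P) c" by (simp add: eig_def y vec.scale)
    qed
  qed
qed

lemma dim_eig_conj:
  fixes P D :: "'k::field^'n^'n"
  assumes P: "invertible P" and D: "diagonal_mat D"
  shows "vec.dim (eig (P ** D ** matrix_inv P) c) = card {i. D$i$i = c}"
proof -
  have "vec.dim ((*v) P ` eig D c) = vec.dim (eig D c)"
    by (rule vec.dim_image_eq[OF matrix_vector_mul_linear_gen])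
       (use inj_matrix_vector_mult[OF P] in \<open>auto simp: inj_on_def\<close>)
  thus ?thesis using eig_conj[OF P] eig_diag[OF D] dim_Zs by metis
qed

lemma conj_form:
  fixes P D B :: "'k::field^'n^'n"
  assumes P: "invertible P" and D: "diagonal_mat D"
    and orth: "transpose (P ** D ** matrix_inv P) ** B ** (P ** D ** matrix_inv P) = B"
  shows "D ** (transpose P ** B ** P) ** D = transpose P ** B ** P"
proof -
  have PPi: "P ** matrix_inv P = mat 1" "matrix_inv P ** P = mat 1" using matrix_inv_props[OF P] by auto
  have t1: "transpose P ** transpose (matrix_inv P) = mat 1"
    using PPi(2) by (metis matrix_transpose_mul transpose_mat)
  have t1': "transpose P ** (transpose (matrix_inv P) ** Y) = Y" for Y :: "'k^'n^'n"
    by (metis matrix_mul_assoc t1 matrix_mul_lid)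
  have t2': "Y ** matrix_inv P ** P = Y" for Y :: "'k^'n^'n"
    by (metis matrix_mul_assoc PPi(2) matrix_mul_rid)
  have "transpose P ** (transpose (P ** D ** matrix_inv P) ** B ** (P ** D ** matrix_inv P)) ** P
        = transpose P ** B ** P" using orth by simp
  thus ?thesis
    by (simp add: matrix_mul_assoc matrix_transpose_mul diag_transpose[OF D] t1 t2' matrix_mul_lid)
qed

lemma conj_form_entries:
  fixes G D :: "'k::field^'n^'n"
  assumes D: "diagonal_mat D" and e: "D ** G ** D = G"
  shows "G$i$j \<noteq> 0 \<Longrightarrow> D$i$i * D$j$j = 1"
proof -
  assume g: "G$i$j \<noteq> 0"
  have "G$i$j = D$i$i * G$i$j * D$j$j"
    using arg_cong[OF e, of "\<lambda>M. M$i$j"] by (simp add: diag_mm_left[OF D] diag_mm_right[OF D])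
  hence "G$i$j * (D$i$i * D$j$j) = G$i$j * 1" by (simp add: mult_ac)
  thus ?thesis using g by (metis mult_left_cancel)
qed

lemma card_pair_le:
  fixes G :: "'k::field^'n^'n" and d :: "'n \<Rightarrow> 'k"
  assumes inv: "invertible G" and rel: "\<And>i j. G$i$j \<noteq> 0 \<Longrightarrow> d i * d j = 1" and lam: "lam \<noteq> 0"
  shows "card {i. d i = lam} \<le> card {i. d i = inverse lam}"
proof -
  have sub: "(*v) G ` Zs {i. d i = lam} \<subseteq> Zs {i. d i = inverse lam}"
  proof
    fix z assume "z \<in> (*v) G ` Zs {i. d i = lam}"
    then obtain y where y: "y \<in> Zs {i. d i = lam}" "z = G *v y" by blast
    show "z \<in> Zs {i. d i = inverse lam}"
      unfolding Zs_def
    proof (intro CollectI allI impI)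
      fix i assume i: "i \<notin> {i. d i = inverse lam}"
      have "\<forall>j. G$i$j * y$j = 0"
      proof
        fix j
        show "G$i$j * y$j = 0"
        proof (rule ccontr)
          assume "G$i$j * y$j \<noteq> 0"
          hence "G$i$j \<noteq> 0" "y$j \<noteq> 0" by auto
          hence "d i * d j = 1" "d j = lam" using rel y(1) by (auto simp: Zs_def)
          hence "d i = inverse lam" using lam by (simp add: field_simps)
          thus False using i by simp
        qed
      qed
      thus "z$i = 0" using y(2) by (simp add: matrix_vector_mult_def sum.neutral)
    qed
  qed
  have "vec.dim ((*v) G ` (Zs {i. d i = lam} :: ('k^'n) set)) = vec.dim (Zs {i. d i = lam} :: ('k^'n) set)"
    by (rule vec.dim_image_eq[OF matrix_vector_mul_linear_gen])
       (use inj_matrix_vector_mult[OF inv] in \<open>auto simp: inj_on_def\<close>)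
  hence "vec.dim (Zs {i. d i = lam} :: ('k^'n) set) \<le> vec.dim (Zs {i. d i = inverse lam} :: ('k^'n) set)"
    using vec.dim_subset[OF sub] by simp
  thus ?thesis by (simp add: dim_Zs)
qed

lemma bf_axis_right: "bf G y (axis j 1) = (transpose G *v y)$j"
proof -
  have "bf G y (axis j 1) = (\<Sum>i\<in>UNIV. y$i * G$i$j)" unfolding bf_def mv_axis ..
  also have "\<dots> = (transpose G *v y)$j" by (simp add: matrix_vector_mult_def transpose_def mult.commute)
  finally show ?thesis .
qed

lemma nondeg_Zs:
  fixes G :: "'k::field^'n^'n" and d :: "'n \<Rightarrow> 'k"
  assumes inv: "invertible G" and rel: "\<And>i j. G$i$j \<noteq> 0 \<Longrightarrow> d i * d j = 1" and c: "c * c = 1"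
    and y: "y \<in> Zs {i. d i = c}" "y \<noteq> 0"
  shows "\<exists>j. d j = c \<and> bf G y (axis j 1) \<noteq> 0"
proof -
  have "transpose G *v y \<noteq> 0"
    using inj_matrix_vector_mult[OF invertible_transpose_gen[OF inv]] y(2)
    by (metis injD matrix_vector_mult_0_right)
  then obtain j where j: "(transpose G *v y)$j \<noteq> 0" by (metis vec_eq_iff zero_index)
  hence "(\<Sum>i\<in>UNIV. y$i * G$i$j) \<noteq> 0" by (simp add: matrix_vector_mult_def transpose_def mult.commute)
  then obtain i where i: "y$i * G$i$j \<noteq> 0" by (meson sum.neutral)
  hence "y$i \<noteq> 0" "G$i$j \<noteq> 0" by auto
  hence "d i = c" "d i * d j = 1" using y(1) rel by (auto simp: Zs_def)
  hence "d j = c" using c by (metis mult.commute mult_left_cancel one_neq_zero mult_zero_left)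
  thus ?thesis using j bf_axis_right by metis
qed



lemma pair_induct:
  fixes L :: "'k::field set" and m :: "'k \<Rightarrow> nat"
  assumes "finite L" "\<forall>x\<in>L. inverse x \<in> L \<and> inverse x \<noteq> x \<and> m (inverse x) = m x \<and> x \<noteq> 0"
  shows "even (\<Sum>x\<in>L. m x) \<and> (\<Prod>x\<in>L. x ^ m x) = 1"
  using assms
proof (induction "card L" arbitrary: L rule: less_induct)
  case less
  show ?case
  proof (cases "L = {}")
    case True thus ?thesis by simp
  next
    case False
    then obtain x where x: "x \<in> L" by blast
    let ?L = "L - {x, inverse x}"
    have props: "inverse x \<in> L" "inverse x \<noteq> x" "m (inverse x) = m x" "x \<noteq> 0"
      using less.prems x by auto
    have hy: "\<forall>y\<in>?L. inverse y \<in> ?L \<and> inverse y \<noteq> y \<and> m (inverse y) = m y \<and> y \<noteq> 0"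
    proof
      fix y assume y: "y \<in> ?L"
      have "inverse y \<noteq> x" using y by (metis DiffD2 inverse_inverse_eq insertCI)
      moreover have "inverse y \<noteq> inverse x" using y by auto
      ultimately show "inverse y \<in> ?L \<and> inverse y \<noteq> y \<and> m (inverse y) = m y \<and> y \<noteq> 0"
        using less.prems y by auto
    qed
    have sub: "{x, inverse x} \<subseteq> L" using props x by auto
    have lt: "card ?L < card L"
      using less.prems(1) sub props(2) by (metis Diff_cancel Diff_subset card_Diff_subset card_mono
          finite_subset psubsetI psubset_card_mono x Diff_iff insertI1)
    have IH: "even (\<Sum>y\<in>?L. m y) \<and> (\<Prod>y\<in>?L. y ^ m y) = 1"
      by (rule less.hyps[OF lt]) (use less.prems hy in auto)
    have fin: "finite ?L" using less.prems(1) by simp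
    have split: "L = insert x (insert (inverse x) ?L)" using sub by auto
    have s: "(\<Sum>y\<in>L. m y) = m x + m (inverse x) + (\<Sum>y\<in>?L. m y)"
      by (subst split) (use fin props(2) in simp)
    have p: "(\<Prod>y\<in>L. y ^ m y) = x ^ m x * (inverse x) ^ m (inverse x) * (\<Prod>y\<in>?L. y ^ m y)"
      by (subst split) (use fin props(2) in simp)
    have "x ^ m x * (inverse x) ^ m x = 1" using props(4) by (simp add: power_inverse[symmetric] field_simps)
    thus ?thesis using IH s p props(3) by simp
  qed
qed

lemma parity_eigen:
  fixes d :: "'n::finite \<Rightarrow> 'k::field"
  assumes two: "(2::'k) \<noteq> 0"
    and nz: "\<And>i. d i \<noteq> 0"
    and pair: "\<And>lam. lam \<noteq> 0 \<Longrightarrow> card {i. d i = lam} = card {i. d i = inverse lam}"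
    and prod1: "(\<Prod>i\<in>UNIV. d i) = 1"
  shows "even (card {i. d i = -1})" "even (card {i. d i \<noteq> 1 \<and> d i \<noteq> -1})"
proof -
  let ?T = "{i. d i \<noteq> 1 \<and> d i \<noteq> -1}"
  let ?L = "d ` ?T"
  let ?m = "\<lambda>lam. card {i. d i = lam}"
  have sq: "lam * lam = 1 \<Longrightarrow> lam = 1 \<or> lam = -1" for lam :: 'k
  proof -
    assume "lam * lam = 1"
    hence "(lam - 1) * (lam + 1) = 0" by (simp add: algebra_simps)
    thus ?thesis by (auto simp: eq_neg_iff_add_eq_0)
  qed
  have mT: "?m lam = card {i \<in> ?T. d i = lam}" if "lam \<in> ?L" for lam
    using that by (intro arg_cong[where f=card]) auto
  have Lprops: "\<forall>x\<in>?L. inverse x \<in> ?L \<and> inverse x \<noteq> x \<and> ?m (inverse x) = ?m x \<and> x \<noteq> 0"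
  proof
    fix x assume x: "x \<in> ?L"
    have x0: "x \<noteq> 0" using x nz by auto
    have xpm: "x \<noteq> 1" "x \<noteq> -1" using x by auto
    have mm: "?m (inverse x) = ?m x" using pair[OF x0] by simp
    have "?m x > 0" using x by (auto simp: card_gt_0_iff)
    hence "{i. d i = inverse x} \<noteq> {}" using mm by (metis card.empty less_irrefl)
    then obtain i where i: "d i = inverse x" by blast
    have ipm: "inverse x \<noteq> 1" "inverse x \<noteq> -1" using xpm x0
      by (metis inverse_1 inverse_inverse_eq, metis inverse_minus_eq inverse_1 inverse_inverse_eq)
    have "inverse x \<in> ?L" using i ipm by (metis (mono_tags, lifting) image_eqI mem_Collect_eq)
    moreover have "inverse x \<noteq> x"
    proof
      assume "inverse x = x"
      hence "x * x = 1" using x0 by (metis right_inverse)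
      thus False using sq xpm by blast
    qed
    ultimately show "inverse x \<in> ?L \<and> inverse x \<noteq> x \<and> ?m (inverse x) = ?m x \<and> x \<noteq> 0"
      using mm x0 by blast
  qed
  have PI: "even (\<Sum>x\<in>?L. ?m x) \<and> (\<Prod>x\<in>?L. x ^ ?m x) = 1"
    by (rule pair_induct) (use Lprops in auto)
  have cardT: "card ?T = (\<Sum>x\<in>?L. ?m x)"
  proof -
    have "card ?T = (\<Sum>i\<in>?T. 1)" by simp
    also have "\<dots> = (\<Sum>x\<in>?L. \<Sum>i\<in>{i \<in> ?T. d i = x}. 1)"
      by (rule sum.group[symmetric]) auto
    also have "\<dots> = (\<Sum>x\<in>?L. ?m x)" using mT by (intro sum.cong) auto
    finally show ?thesis .
  qed
  have prodT: "(\<Prod>i\<in>?T. d i) = 1"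
  proof -
    have "(\<Prod>i\<in>?T. d i) = (\<Prod>x\<in>?L. \<Prod>i\<in>{i \<in> ?T. d i = x}. d i)"
      by (rule prod.group[symmetric]) auto
    also have "\<dots> = (\<Prod>x\<in>?L. x ^ ?m x)"
    proof (rule prod.cong[OF refl])
      fix x assume x: "x \<in> ?L"
      have "(\<Prod>i\<in>{i \<in> ?T. d i = x}. d i) = (\<Prod>i\<in>{i \<in> ?T. d i = x}. x)" by (rule prod.cong) auto
      also have "\<dots> = x ^ ?m x" using mT[OF x] by simp
      finally show "(\<Prod>i\<in>{i \<in> ?T. d i = x}. d i) = x ^ ?m x" .
    qed
    finally show ?thesis using PI by simp
  qed
  show "even (card ?T)" using PI cardT by simp
  have m1: "1 \<noteq> (-1::'k)" using two by (metis one_add_one add_eq_0_iff equation_minus_iff)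
  have U: "(UNIV::'n set) = {i. d i = 1} \<union> ({i. d i = -1} \<union> ?T)" by auto
  have "(\<Prod>i\<in>UNIV. d i) = (\<Prod>i\<in>{i. d i = 1}. d i) * ((\<Prod>i\<in>{i. d i = -1}. d i) * (\<Prod>i\<in>?T. d i))"
    unfolding U using m1 by (subst prod.union_disjoint; auto)+
  also have "\<dots> = (-1) ^ card {i. d i = -1}" using prodT by simp
  finally have "(-1::'k) ^ card {i. d i = -1} = 1" using prod1 by simp
  thus "even (card {i. d i = -1})" using m1 by (metis neg_one_odd_power)
qed



lemma bf_symm_dot: "transpose B = B \<Longrightarrow> bf B e x = (\<Sum>j\<in>UNIV. (B *v e)$j * x$j)"
  using bf_sym[of B e x] unfolding bf_def by (simp add: mult.commute)

locale eich =
  fixes B :: "'k::field^'n^'n" and e w :: "'k^'n"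
  assumes symB: "transpose B = B" and ee: "bf B e e = 0" and ew: "bf B e w = 0"
    and two: "(2::'k) \<noteq> 0"
begin

definition "q = bf B w w / 2"

definition Ef :: "'k \<Rightarrow> 'k^'n \<Rightarrow> 'k^'n" where
  "Ef t x = x + (t * bf B e x) *s w - (t * bf B w x + t * t * q * bf B e x) *s e"

definition Em :: "'k \<Rightarrow> 'k^'n^'n" where
  "Em t = (\<chi> i j. (if i = j then 1 else 0) + t * w$i * (B *v e)$j - t * e$i * (B *v w)$j
                 - t * t * q * e$i * (B *v e)$j)"

lemma Em_mv: "Em t *v x = Ef t x"
proof (subst vec_eq_iff, intro allI)
  fix i
  have "(Em t *v x)$i = (\<Sum>j\<in>UNIV. (if i = j then x$j else 0) + t * w$i * ((B *v e)$j * x$j)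
        - t * e$i * ((B *v w)$j * x$j) - t * t * q * e$i * ((B *v e)$j * x$j))"
    unfolding matrix_vector_mult_def[of "Em t"] by (simp, rule sum.cong[OF refl]) (simp add: Em_def algebra_simps)
  also have "\<dots> = x$i + t * w$i * (\<Sum>j\<in>UNIV. (B *v e)$j * x$j) - t * e$i * (\<Sum>j\<in>UNIV. (B *v w)$j * x$j)
        - t * t * q * e$i * (\<Sum>j\<in>UNIV. (B *v e)$j * x$j)"
    by (simp add: sum.distrib sum_subtractf sum_distrib_left)
  also have "\<dots> = Ef t x $ i"
    unfolding Ef_def bf_symm_dot[OF symB] by (simp add: algebra_simps)
  finally show "(Em t *v x)$i = Ef t x $ i" .
qed

lemma bfs: "bf B u v = bf B v u" using bf_sym[OF symB] .

lemmas bf_lin = bf_add_left bf_add_right bf_diff_left bf_diff_right bf_scale_left bf_scale_right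

lemma we: "bf B w e = 0" using ew bfs by metis

lemma ww: "bf B w w = 2 * q" using two by (simp add: q_def)

lemma Ef_bf: "bf B (Ef t x) (Ef t y) = bf B x y"
proof -
  have "bf B (Ef t x) (Ef t y) = bf B x y + (t * bf B e y) * bf B x w - (t * bf B w y + t * t * q * bf B e y) * bf B x e
     + (t * bf B e x) * bf B w y + (t * bf B e x) * (t * bf B e y) * bf B w w
     - (t * bf B e x) * (t * bf B w y + t * t * q * bf B e y) * bf B w e
     - (t * bf B w x + t * t * q * bf B e x) * bf B e y
     - (t * bf B w x + t * t * q * bf B e x) * (t * bf B e y) * bf B e w
     + (t * bf B w x + t * t * q * bf B e x) * (t * bf B w y + t * t * q * bf B e y) * bf B e e"
    unfolding Ef_def by (simp add: bf_lin algebra_simps)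
  also have "\<dots> = bf B x y"
    using ee ew we ww bfs[of x w] bfs[of x e] by (simp add: algebra_simps)
  finally show ?thesis .
qed

lemma bf_e_Ef: "bf B e (Ef t x) = bf B e x"
  unfolding Ef_def using ee ew by (simp add: bf_lin)

lemma bf_w_Ef: "bf B w (Ef t x) = bf B w x + 2 * q * t * bf B e x"
  unfolding Ef_def using we ww by (simp add: bf_lin algebra_simps)

lemma Ef_comp: "Ef s (Ef t x) = Ef (s + t) x"
proof -
  have "Ef s (Ef t x) = Ef t x + (s * bf B e x) *s w - (s * (bf B w x + 2 * q * t * bf B e x) + s * s * q * bf B e x) *s e"
    unfolding Ef_def[of s "Ef t x"] bf_e_Ef bf_w_Ef ..
  also have "\<dots> = Ef (s + t) x"
    unfolding Ef_def by (simp add: vec_eq_iff algebra_simps)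
  finally show ?thesis .
qed

lemma Em_comp: "Em s ** Em t = Em (s + t)"
  unfolding matrix_eq by (simp add: matrix_vector_mul_assoc[symmetric] Em_mv Ef_comp)

lemma Em_orth: "transpose (Em t) ** B ** Em t = B"
  by (rule bf_eq_imp_eq) (simp add: bf_mult[symmetric] Em_mv Ef_bf)

lemma det_Em_sq: "invertible B \<Longrightarrow> det (Em t) * det (Em t) = 1"
proof -
  assume iB: "invertible B"
  have "det (transpose (Em t)) * det B * det (Em t) = det B"
    using arg_cong[OF Em_orth[of t], of det] by (simp add: det_mul)
  hence "det B * (det (Em t) * det (Em t)) = det B * 1" by (simp add: mult_ac)
  moreover have "det B \<noteq> 0" using iB by (simp add: invertible_det_nz)
  ultimately show ?thesis by (metis mult_left_cancel)
qed

lemma det_Em1: "invertible B \<Longrightarrow> det (Em 1) = 1"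
proof -
  assume iB: "invertible B"
  have "Em 1 = Em (1/2) ** Em (1/2)" using Em_comp[of "1/2" "1/2"] two by simp
  hence "det (Em 1) = det (Em (1/2)) * det (Em (1/2))" by (simp add: det_mul)
  thus ?thesis using det_Em_sq[OF iB] by simp
qed

definition "Nf x = Ef 1 x - x"

lemma Nf_eq: "Nf x = bf B e x *s w - (bf B w x + q * bf B e x) *s e"
  unfolding Nf_def Ef_def by (simp add: vec_eq_iff algebra_simps)

lemma Nf_cube: "Nf (Nf (Nf x)) = 0"
proof -
  have a: "bf B e (Nf x) = 0" "bf B w (Nf x) = 2 * q * bf B e x"
    unfolding Nf_eq using ee ew we ww by (simp_all add: bf_lin algebra_simps)
  have "Nf (Nf x) = (- (2 * q * bf B e x)) *s e"
    unfolding Nf_eq[of "Nf x"] a by (simp add: vec_eq_iff algebra_simps)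
  moreover have "Nf (c *s e) = 0" for c
    unfolding Nf_eq using ee we by (simp add: bf_lin)
  ultimately show ?thesis by (metis (no_types))
qed

lemma N_mv: "(Em 1 - mat 1) *v x = Nf x"
  by (simp add: matrix_vector_mult_diff_rdistrib Em_mv Nf_def)

lemma unipotent_Em1: "unipotent (Em 1)"
proof -
  have "(Em 1 - mat 1) ** ((Em 1 - mat 1) ** ((Em 1 - mat 1) ** mat 1)) = 0"
    unfolding matrix_eq by (simp add: matrix_vector_mul_assoc[symmetric] N_mv Nf_cube)
  hence "(((**) (Em 1 - mat 1)) ^^ 3) (mat 1) = 0" by (simp add: numeral_3_eq_3)
  thus ?thesis unfolding unipotent_def by blast
qed

lemma Em_commute:
  fixes g :: "'k^'n^'n"
  assumes orth: "transpose g ** B ** g = B" and ge: "g *v e = c *s e" and gw: "g *v w = c *s w"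
    and cc: "c * c = 1"
  shows "g ** Em t = Em t ** g"
proof -
  have bfg: "bf B (g *v u) (g *v v) = bf B u v" for u v using orth by (simp add: bf_mult)
  have ce: "e = c *s (g *v e)" using ge cc by (simp add: vec.scale_scale)
  have cw: "w = c *s (g *v w)" using gw cc by (simp add: vec.scale_scale)
  have a: "bf B e (g *v x) = c * bf B e x" for x
    by (subst ce) (simp add: bf_scale_left bfg)
  have b: "bf B w (g *v x) = c * bf B w x" for x
    by (subst cw) (simp add: bf_scale_left bfg)
  have "g *v Ef t x = Ef t (g *v x)" for x
    unfolding Ef_def a b
    by (simp add: matrix_vector_right_distrib matrix_vector_mult_diff_distrib vec.scale ge gw
        vec.scale_scale algebra_simps)
  thus ?thesis unfolding matrix_eq by (simp add: matrix_vector_mul_assoc[symmetric] Em_mv)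
qed

lemma Em1_nontriv:
  assumes iB: "invertible B" and e0: "e \<noteq> 0" and wn: "\<And>k. w \<noteq> k *s e"
  shows "Em 1 \<noteq> mat 1"
proof
  assume E: "Em 1 = mat 1"
  have "B *v e \<noteq> 0" using inj_matrix_vector_mult[OF iB] e0 by (metis injD matrix_vector_mult_0_right)
  then obtain j where j: "(B *v e)$j \<noteq> 0" by (metis vec_eq_iff zero_index)
  let ?x = "axis j (1::'k)"
  have a: "bf B e ?x \<noteq> 0" using j bf_axis_right[of B e j] symB by simp
  have "Nf ?x = 0" using E N_mv[of ?x] by simp
  hence "bf B e ?x *s w = (bf B w ?x + q * bf B e ?x) *s e" unfolding Nf_eq by simp
  hence "w = ((bf B w ?x + q * bf B e ?x) / bf B e ?x) *s e"
    using a by (metis (no_types, lifting) divide_inverse_commute vec.scale_scale vector_smult_lid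
        right_inverse mult.commute)
  thus False using wn by blast
qed

end



lemma two_indep:
  fixes V :: "('k::field^'n) set"
  assumes "vec.dim V \<ge> 2"
  shows "\<exists>x y. x \<in> V \<and> y \<in> V \<and> x \<noteq> y \<and> vec.independent {x, y}"
proof -
  obtain Bs where Bs: "Bs \<subseteq> V" "vec.independent Bs" "V \<subseteq> vec.span Bs" "card Bs = vec.dim V"
    by (rule vec.basis_exists)
  have fin: "finite Bs" using Bs(2) vec.finiteI_independent by blast
  have "card Bs \<ge> 2" using Bs(4) assms by simp
  then obtain x where x: "x \<in> Bs" by (metis all_not_in_conv card.empty not_numeral_le_zero)
  have "card (Bs - {x}) \<ge> 1" using fin x \<open>card Bs \<ge> 2\<close> by (simp add: card_Diff_singleton)
  then obtain y where y: "y \<in> Bs - {x}" by (metis all_not_in_conv card.empty not_one_le_zero)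
  have sub: "{x, y} \<subseteq> Bs" using x y by auto
  have "vec.independent {x, y}" by (rule vec.independent_mono[OF Bs(2) sub])
  moreover have "x \<in> V" "y \<in> V" "x \<noteq> y" using x y Bs(1) by auto
  ultimately show ?thesis by blast
qed

lemma indep_not_span:
  assumes "vec.independent {x, y}" "x \<noteq> y"
  shows "x \<notin> vec.span {y}"
proof
  assume "x \<in> vec.span {y}"
  hence "x \<in> vec.span ({x, y} - {x})" using assms(2) by (simp add: insert_Diff_if)
  hence "vec.dependent {x, y}" unfolding vec.dependent_def by blast
  thus False using assms(1) by simp
qed

lemma eig_subspace: "vec.subspace (eig M c)"
  unfolding vec.subspace_def eig_def
  by (simp add: matrix_vector_right_distrib vec.scale vec.scale_right_distrib vec.scale_scale mult.commute)

lemma bf_ker_subspace: "vec.subspace {x. bf B e x = 0}"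
  unfolding vec.subspace_def by (simp add: bf_add_right bf_scale_right)

lemma hyperplane_dim:
  fixes V :: "('k::field^'n) set"
  assumes V: "vec.subspace V"
  shows "vec.dim V \<le> vec.dim (V \<inter> {x. bf B e x = 0}) + 1"
proof (cases "\<forall>x\<in>V. bf B e x = 0")
  case True
  hence "V \<inter> {x. bf B e x = 0} = V" by auto
  thus ?thesis by simp
next
  case False
  then obtain z where z: "z \<in> V" "bf B e z \<noteq> 0" by blast
  let ?W = "V \<inter> {x. bf B e x = 0}"
  have Wsub: "vec.subspace ?W" using V bf_ker_subspace vec.subspace_inter by blast
  have "V \<subseteq> {a + b |a b. a \<in> ?W \<and> b \<in> vec.span {z}}"
  proof
    fix x assume x: "x \<in> V"
    let ?k = "bf B e x / bf B e z"
    have "x - ?k *s z \<in> ?W"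
      using x z V by (auto simp: bf_diff_right bf_scale_right vec.subspace_diff vec.subspace_scale)
    moreover have "?k *s z \<in> vec.span {z}" by (simp add: vec.span_scale vec.span_base)
    moreover have "x = (x - ?k *s z) + ?k *s z" by simp
    ultimately show "x \<in> {a + b |a b. a \<in> ?W \<and> b \<in> vec.span {z}}" by blast
  qed
  hence "vec.dim V \<le> vec.dim {a + b |a b. a \<in> ?W \<and> b \<in> vec.span {z}}" by (rule vec.dim_subset)
  also have "\<dots> \<le> vec.dim ?W + vec.dim (vec.span {z})"
    using vec.dim_sums_Int[OF Wsub vec.subspace_span[of "{z}"]] by simp
  also have "vec.dim (vec.span {z}) \<le> 1" using vec.dim_le_card[of "vec.span {z}" "{z}"] by (simp add: vec.span_span)
  finally show ?thesis by simp
qed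

lemma big_eigenspace:
  fixes Lg B :: "'k::alg_closed_field^'n^'n"
  assumes symB: "transpose B = B" and iB: "invertible B" and two: "(2::'k) \<noteq> 0"
    and orth: "transpose Lg ** B ** Lg = B" and cc: "c * c = 1"
    and dim: "vec.dim (eig Lg c) \<ge> 3"
  shows "\<exists>u. unipotent u \<and> u ** Lg = Lg ** u \<and> u \<noteq> mat 1 \<and> det u = 1 \<and> transpose u ** B ** u = B"
proof -
  let ?V = "eig Lg c"
  have Vs: "vec.subspace ?V" by (rule eig_subspace)
  obtain x1 x2 where xs: "x1 \<in> ?V" "x2 \<in> ?V" "x1 \<noteq> x2" "vec.independent {x1, x2}"
    using two_indep[of ?V] dim by auto
  have x2nz: "x2 \<noteq> 0" using xs(4) vec.dependent_zero by blast
  obtain e where e: "e \<in> ?V" "e \<noteq> 0" "bf B e e = 0"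
  proof (cases "bf B x2 x2 = 0")
    case True thus ?thesis using that xs x2nz by blast
  next
    case False
    define f where "f k = (if k = 0 then bf B x1 x1 else if k = 1 then 2 * bf B x1 x2 else bf B x2 x2)" for k :: nat
    obtain t where t: "(\<Sum>k\<le>2. f k * t ^ k) = 0"
      using alg_closed[of 2 f] False by (auto simp: f_def)
    have tt: "bf B x1 x1 + 2 * bf B x1 x2 * t + bf B x2 x2 * t^2 = 0"
      using t by (simp add: f_def numeral_2_eq_2 atMost_Suc algebra_simps power2_eq_square)
    let ?e = "x1 + t *s x2"
    have "bf B ?e ?e = bf B x1 x1 + 2 * bf B x1 x2 * t + bf B x2 x2 * t^2"
      using bf_sym[OF symB, of x2 x1] by (simp add: bf_add_left bf_add_right bf_scale_left bf_scale_right
          algebra_simps power2_eq_square)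
    hence "bf B ?e ?e = 0" using tt by simp
    moreover have "?e \<in> ?V" using xs Vs by (simp add: vec.subspace_add vec.subspace_scale)
    moreover have "?e \<noteq> 0"
    proof
      assume "?e = 0"
      hence "x1 = (- t) *s x2" by (simp add: eq_neg_iff_add_eq_0 vec.scale_minus_left)
      hence "x1 \<in> vec.span {x2}" by (metis vec.span_scale vec.span_base singletonI)
      thus False using indep_not_span xs(3,4) by blast
    qed
    ultimately show ?thesis using that by blast
  qed
  let ?W = "?V \<inter> {x. bf B e x = 0}"
  have "vec.dim ?W \<ge> 2" using hyperplane_dim[OF Vs, of B e] dim by simp
  then obtain w1 w2 where ws: "w1 \<in> ?W" "w2 \<in> ?W" "w1 \<noteq> w2" "vec.independent {w1, w2}"
    using two_indep[of ?W] by auto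
  obtain w where w: "w \<in> ?W" "w \<notin> vec.span {e}"
  proof (cases "w1 \<in> vec.span {e} \<and> w2 \<in> vec.span {e}")
    case True
    hence "card {w1, w2} \<le> vec.dim (vec.span {e})"
      using vec.independent_card_le_dim[of "{w1, w2}" "vec.span {e}"] ws(4) by auto
    also have "\<dots> \<le> 1" using vec.dim_le_card[of "vec.span {e}" "{e}"] by (simp add: vec.span_span)
    finally show ?thesis using ws(3) by simp
  next
    case False thus ?thesis using that ws by blast
  qed
  have wn: "\<And>k. w \<noteq> k *s e" using w(2) by (metis vec.span_base vec.span_scale singletonI)
  interpret E: eich B e w
    by unfold_locales (use symB e w two in auto)
  have ge: "Lg *v e = c *s e" "Lg *v w = c *s w" using e(1) w(1) by (auto simp: eig_def)
  show ?thesis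
  proof (intro exI conjI)
    show "unipotent (E.Em 1)" by (rule E.unipotent_Em1)
    show "E.Em 1 ** Lg = Lg ** E.Em 1" using E.Em_commute[OF orth ge cc] by simp
    show "E.Em 1 \<noteq> mat 1" by (rule E.Em1_nontriv[OF iB e(2) wn])
    show "det (E.Em 1) = 1" by (rule E.det_Em1[OF iB])
    show "transpose (E.Em 1) ** B ** E.Em 1 = B" by (rule E.Em_orth)
  qed
qed



lemma mat_mv: "mat c *v x = c *s (x::'k::comm_ring_1^'n)"
  by (simp add: vec_eq_iff matrix_vector_mult_def mat_def if_distrib[of "\<lambda>x. x * _"] cong: if_cong)

lemma eig_ker: "eig M c = {x. (M - mat c) *v x = 0}"
  by (simp add: eig_def matrix_vector_mult_diff_rdistrib mat_mv)

lemma fixed_eig: "fixed_space g = eig g 1"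
  by (simp add: fixed_space_def eig_def)

lemma lift_eig_dim: "vec.dim (eig (lift_mat M) (to_ac c)) = vec.dim (eig (M::'a::field^'n^'n) c)"
  unfolding eig_ker using dim_ker_lift[of "M - mat c"] by (simp add: lift_mat_diff lift_mat_mat)

lemma liftv_eig: "v \<in> eig M c \<Longrightarrow> liftv v \<in> eig (lift_mat M) (to_ac c)"
  by (simp add: eig_def lift_mv liftv_scale)

lemma nondeg_transfer:
  fixes M Bm :: "'a::field^'n^'n"
  assumes Knd: "\<And>x. x \<in> eig (lift_mat M) (to_ac c) \<Longrightarrow> x \<noteq> 0 \<Longrightarrow>
                  \<exists>y\<in>eig (lift_mat M) (to_ac c). bf (lift_mat Bm) x y \<noteq> 0"
    and u: "u \<in> eig M c" and orth: "\<forall>v\<in>eig M c. bf Bm u v = 0"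
  shows "u = 0"
proof -
  obtain Bs where Bs: "Bs \<subseteq> eig M c" "vec.independent Bs" "eig M c \<subseteq> vec.span Bs" "card Bs = vec.dim (eig M c)"
    by (rule vec.basis_exists)
  have finB: "finite Bs" using Bs(2) vec.finiteI_independent by blast
  let ?V = "eig (lift_mat M) (to_ac c)"
  have sub: "liftv ` Bs \<subseteq> ?V" using Bs(1) liftv_eig by blast
  have ind: "vec.independent (liftv ` Bs)" using lift_independent[OF Bs(2)] .
  have card: "card (liftv ` Bs) = vec.dim ?V"
  proof -
    have "card (liftv ` Bs) = card Bs" by (rule card_image[OF inj_on_subset[OF inj_liftv subset_UNIV]])
    thus ?thesis using lift_eig_dim[of M c] Bs(4) by simp
  qed
  have span: "?V \<subseteq> vec.span (liftv ` Bs)"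
    using vec.card_eq_dim[OF sub card] finB ind by simp
  have zero: "bf (lift_mat Bm) (liftv u) y = 0" if "y \<in> ?V" for y
  proof -
    have "y \<in> vec.span (liftv ` Bs)" using that span by blast
    moreover have "vec.subspace {y. bf (lift_mat Bm) (liftv u) y = 0}" by (rule bf_ker_subspace)
    moreover have "liftv ` Bs \<subseteq> {y. bf (lift_mat Bm) (liftv u) y = 0}"
      using Bs(1) orth by (auto simp: bf_lift)
    ultimately show ?thesis using vec.span_minimal by blast
  qed
  have "liftv u \<in> ?V" using liftv_eig[OF u] .
  hence "liftv u = 0" using Knd zero by blast
  thus ?thesis by simp
qed

lemma dim1_line:
  fixes L :: "('k::field^'n) set"
  assumes "vec.subspace L" "vec.dim L = 1"
  shows "\<exists>v. v \<noteq> 0 \<and> L = vec.span {v}"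
proof -
  obtain Bs where Bs: "Bs \<subseteq> L" "vec.independent Bs" "L \<subseteq> vec.span Bs" "card Bs = vec.dim L"
    by (rule vec.basis_exists)
  then obtain v where v: "Bs = {v}" using assms(2) by (metis card_1_singletonE)
  have "v \<noteq> 0" using Bs(2) v vec.dependent_zero by blast
  moreover have "vec.span {v} \<subseteq> L" using Bs(1) v assms(1) vec.span_minimal by blast
  ultimately show ?thesis using Bs(3) v by blast
qed

lemma line_eigen:
  assumes "g *v v \<in> vec.span {v}"
  shows "\<exists>lam. g *v v = lam *s (v::'k::field^'n)"
  using assms by (auto simp: vec.span_singleton)



lemma sq_one: "lam * lam = 1 \<Longrightarrow> lam = 1 \<or> lam = (-1::'k::field)"
proof -
  assume "lam * lam = 1"
  hence "(lam - 1) * (lam + 1) = 0" by (simp add: algebra_simps)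
  thus ?thesis by (auto simp: eq_neg_iff_add_eq_0)
qed

lemma stab_line:
  fixes A g :: "'k::field^'n^'n"
  assumes orth: "transpose g ** (A + transpose A) ** g = A + transpose A"
    and L: "nondeg_subspace A L" "vec.dim L = 1" "(\<lambda>v. g *v v) ` L = L"
  shows "\<exists>v. v \<noteq> 0 \<and> L = vec.span {v} \<and> (v \<in> eig g 1 \<or> v \<in> eig g (-1))"
proof -
  have sL: "vec.subspace L" using L(1) by (simp add: nondeg_subspace_def)
  obtain v where v: "v \<noteq> 0" "L = vec.span {v}" using dim1_line[OF sL L(2)] by blast
  have vL: "v \<in> L" using v(2) vec.span_base by blast
  have "g *v v \<in> L" using L(3) vL by blast
  then obtain lam where lam: "g *v v = lam *s v" using line_eigen v(2) by blast
  have "\<exists>u\<in>L. polar A v u \<noteq> 0" using L(1) vL v(1) by (auto simp: nondeg_subspace_def)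
  then obtain u where u: "u \<in> L" "polar A v u \<noteq> 0" by blast
  obtain k where "u = k *s v" using u(1) v(2) by (auto simp: vec.span_singleton)
  hence bvv: "bf (A + transpose A) v v \<noteq> 0" using u(2) by (simp add: polar_bf bf_scale_right)
  have "bf (A + transpose A) (g *v v) (g *v v) = bf (A + transpose A) v v"
    using orth by (simp add: bf_mult)
  hence "(lam * lam) * bf (A + transpose A) v v = 1 * bf (A + transpose A) v v"
    unfolding lam by (simp add: bf_scale_left bf_scale_right mult_ac)
  hence "lam * lam = 1" using bvv by (metis mult_right_cancel)
  hence "lam = 1 \<or> lam = -1" by (rule sq_one)
  thus ?thesis using v lam by (auto simp: eig_def)
qed

theorem mainTheorem16:
  fixes A :: "'a::{finite,field}^'n::finite^'n"
    and g :: "'a^'n^'n"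
  assumes q_odd: "odd CARD('a)"
    and dim_odd: "CARD('n) = 2 * m + 1"
    and nondeg: "nondegenerate_form A"
    and g_Omega: "g \<in> Omega A"
    and g_reg: "regular_semisimple A g"
  shows "\<exists>L0. nondeg_subspace A L0 \<and> vec.dim L0 = 1 \<and> (\<forall>v\<in>L0. g *v v = v)
          \<and> vec.dim (fixed_space g) = 1
          \<and> ((\<forall>L. nondeg_subspace A L \<and> vec.dim L = 1 \<and> (\<lambda>v. g *v v) ` L = L \<longrightarrow> L = L0)
             \<or> (\<exists>U. nondeg_subspace A U \<and> vec.dim U = 2 \<and> (\<forall>u\<in>U. g *v u = - u)
                  \<and> (\<forall>L. nondeg_subspace A L \<and> vec.dim L = 1 \<and> (\<lambda>v. g *v v) ` L = L
                        \<longrightarrow> L = L0 \<or> L \<subseteq> U)))"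
proof -
  let ?Bm = "A + transpose A"
  have twoF: "(2::'a) \<noteq> 0" using two_ne_zero_odd[OF q_odd] .
  have twoK: "(2::'a alg_closure) \<noteq> 0" using twoF by (metis to_ac_numeral to_ac_eq_0_iff)
  have gSO: "g \<in> SO A" by (rule Omega_SO[OF g_Omega])
  have detg: "det g = 1" using gSO by (simp add: SO_def)
  have orthF: "transpose g ** ?Bm ** g = ?Bm" by (rule SO_orth[OF gSO])
  have invBm: "invertible ?Bm" by (rule nondeg_invertible[OF nondeg])
  let ?Lg = "lift_mat g"
  let ?BK = "lift_mat ?Bm"
  have BK: "?BK = lift_mat A + transpose (lift_mat A)" by (simp add: lift_mat_add lift_mat_transpose)
  have symBK: "transpose ?BK = ?BK" unfolding BK by (rule transpose_Bm)
  have invBK: "invertible ?BK" using invBm by (simp add: invertible_det_nz det_lift)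
  have orthK: "transpose ?Lg ** ?BK ** ?Lg = ?BK"
    using arg_cong[OF orthF, of lift_mat] by (simp add: lift_mat_mult lift_mat_transpose)
  have "\<exists>(P::'a alg_closure^'n^'n) (D::'a alg_closure^'n^'n). invertible P \<and> diagonal_mat D \<and> ?Lg = P ** D ** matrix_inv P"
    using g_reg unfolding regular_semisimple_def semisimple_def by simp
  then obtain P D :: "'a alg_closure^'n^'n" where PD: "invertible P" "diagonal_mat D" "?Lg = P ** D ** matrix_inv P"
    by blast
  have R: "\<And>u. u \<in> SO (lift_mat A) \<Longrightarrow> unipotent u \<Longrightarrow> u ** ?Lg = ?Lg ** u \<Longrightarrow> u = mat 1"
    using g_reg unfolding regular_semisimple_def by blast
  have small: "vec.dim (eig ?Lg c) \<le> 2" if cc: "c * c = 1" for c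
  proof (rule ccontr)
    assume "\<not> vec.dim (eig ?Lg c) \<le> 2"
    hence "vec.dim (eig ?Lg c) \<ge> 3" by simp
    from big_eigenspace[OF symBK invBK twoK orthK cc this] obtain u where
      u: "unipotent u" "u ** ?Lg = ?Lg ** u" "u \<noteq> mat 1" "det u = 1" "transpose u ** ?BK ** u = ?BK"
      by blast
    have "quad (lift_mat A) (u *v x) = quad (lift_mat A) x" for x
    proof -
      have "2 * quad (lift_mat A) (u *v x) = bf ?BK (u *v x) (u *v x)"
        by (simp add: polar_self[symmetric] polar_bf BK)
      also have "\<dots> = bf ?BK x x" by (simp add: bf_mult u(5))
      also have "\<dots> = 2 * quad (lift_mat A) x" by (simp add: polar_self[symmetric] polar_bf BK)
      finally show ?thesis using twoK by simp
    qed
    hence "u \<in> SO (lift_mat A)" using u(4) by (simp add: SO_def)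
    thus False using R u by blast
  qed
  define d where "d i = D$i$i" for i
  have PPi: "P ** matrix_inv P = mat 1" using matrix_inv_props[OF PD(1)] by simp
  have detD: "det D = 1"
  proof -
    have "det ?Lg = 1" by (simp add: det_lift detg)
    also have "det ?Lg = det D * (det P * det (matrix_inv P))" unfolding PD(3) by (simp add: det_mul mult_ac)
    also have "det P * det (matrix_inv P) = 1" using PPi by (metis det_I det_mul)
    finally show ?thesis by simp
  qed
  have prodd: "(\<Prod>i\<in>UNIV. d i) = 1"
    using detD det_diagonal[of D] PD(2) by (simp add: diagonal_mat_def d_def)
  have dnz: "d i \<noteq> 0" for i using prodd by (metis UNIV_I finite prod_zero_iff zero_neq_one)
  define G where "G = transpose P ** ?BK ** P"
  have DGD: "D ** G ** D = G" unfolding G_def by (rule conj_form[OF PD(1) PD(2)]) (use orthK PD(3) in simp)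
  have rel: "G$i$j \<noteq> 0 \<Longrightarrow> d i * d j = 1" for i j using conj_form_entries[OF PD(2) DGD] by (simp add: d_def)
  have invG: "invertible G" unfolding G_def
    by (intro invertible_mult invertible_transpose_gen PD(1) invBK)
  have pair: "card {i. d i = lam} = card {i. d i = inverse lam}" if lam0: "lam \<noteq> 0" for lam
  proof -
    have "card {i. d i = lam} \<le> card {i. d i = inverse lam}"
      by (rule card_pair_le[of G d lam, OF invG rel lam0])
    moreover have inl: "inverse lam \<noteq> 0" using lam0 by simp
    moreover have "card {i. d i = inverse lam} \<le> card {i. d i = inverse (inverse lam)}"
      by (rule card_pair_le[of G d "inverse lam", OF invG rel inl])
    ultimately show ?thesis by simp
  qed
  have par: "even (card {i. d i = -1})" "even (card {i. d i \<noteq> 1 \<and> d i \<noteq> -1})"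
    using parity_eigen[OF twoK dnz pair prodd] by auto
  have m1K: "(1::'a alg_closure) \<noteq> -1" using twoK by (metis one_add_one add_eq_0_iff equation_minus_iff)
  have cardsum: "CARD('n) = card {i. d i = 1} + card {i. d i = -1} + card {i. d i \<noteq> 1 \<and> d i \<noteq> -1}"
  proof -
    have U: "(UNIV::'n set) = {i. d i = 1} \<union> ({i. d i = -1} \<union> {i. d i \<noteq> 1 \<and> d i \<noteq> -1})" by auto
    have "card (UNIV::'n set) = card {i. d i = 1} + card ({i. d i = -1} \<union> {i. d i \<noteq> 1 \<and> d i \<noteq> -1})"
      by (subst U, rule card_Un_disjoint) (use m1K in auto)
    also have "card ({i. d i = -1} \<union> {i. d i \<noteq> 1 \<and> d i \<noteq> -1}) = card {i. d i = -1} + card {i. d i \<noteq> 1 \<and> d i \<noteq> -1}"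
      by (rule card_Un_disjoint) auto
    finally show ?thesis by simp
  qed
  have dimK: "vec.dim (eig ?Lg c) = card {i. d i = c}" for c
    using dim_eig_conj[OF PD(1,2), of c] PD(3) by (simp add: d_def)
  have c1: "card {i. d i = 1} = 1"
  proof -
    have "odd (card {i. d i = 1})" using cardsum dim_odd par by presburger
    moreover have "card {i. d i = 1} \<le> 2" using small[of 1] dimK[of 1] by simp
    ultimately show ?thesis by presburger
  qed
  have cm1: "card {i. d i = -1} = 0 \<or> card {i. d i = -1} = 2"
  proof -
    have "card {i. d i = -1} \<le> 2" using small[of "-1"] dimK[of "-1"] by simp
    thus ?thesis using par(1) by presburger
  qed
  have dimF1: "vec.dim (eig g 1) = 1" using lift_eig_dim[of g 1] dimK[of 1] c1 by simp
  have dimFm1: "vec.dim (eig g (-1)) = card {i. d i = -1}"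
    using lift_eig_dim[of g "-1"] dimK[of "-1"] by simp
  have Knd: "\<exists>y\<in>eig ?Lg c. bf ?BK x y \<noteq> 0" if cc: "c * c = 1" and x: "x \<in> eig ?Lg c" "x \<noteq> 0" for c x
  proof -
    obtain y0 where y0: "x = P *v y0" "y0 \<in> eig D c" using x(1) eig_conj[OF PD(1)] PD(3) by auto
    have y0Z: "y0 \<in> Zs {i. d i = c}" using y0(2) eig_diag[OF PD(2)] by (simp add: d_def)
    have "y0 \<noteq> 0" using x(2) y0(1) by auto
    then obtain j where j: "d j = c" "bf G y0 (axis j 1) \<noteq> 0" using nondeg_Zs[OF invG rel cc y0Z] by blast
    have "axis j 1 \<in> eig D c" using eig_diag[OF PD(2)] axis_in_Zs[of j "{i. d i = c}"] j(1) by (simp add: d_def)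
    hence yin: "P *v axis j 1 \<in> eig ?Lg c" using eig_conj[OF PD(1)] PD(3) by auto
    have "bf ?BK x (P *v axis j 1) = bf G y0 (axis j 1)" unfolding G_def y0(1) by (simp add: bf_mult)
    thus ?thesis using yin j(2) by metis
  qed
  have FndC: "u = 0" if cc: "c * c = 1" and u: "u \<in> eig g c" and o: "\<forall>v\<in>eig g c. bf ?Bm u v = 0" for c u
  proof (rule nondeg_transfer[OF _ u o])
    fix x assume "x \<in> eig ?Lg (to_ac c)" "x \<noteq> 0"
    thus "\<exists>y\<in>eig ?Lg (to_ac c). bf ?BK x y \<noteq> 0"
      using Knd[of "to_ac c" x] cc by (metis to_ac_mult to_ac_1)
  qed
  have ndeig: "nondeg_subspace A (eig g c)" if cc: "c * c = 1" for c
    unfolding nondeg_subspace_def polar_bf using eig_subspace FndC[OF cc] by blast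
  let ?L0 = "eig g 1"
  have lines: "L = ?L0 \<or> L \<subseteq> eig g (-1)"
    if L: "nondeg_subspace A L" "vec.dim L = 1" "(\<lambda>v. g *v v) ` L = L" for L
  proof -
    obtain v where v: "v \<noteq> 0" "L = vec.span {v}" "v \<in> eig g 1 \<or> v \<in> eig g (-1)"
      using stab_line[OF orthF L] by blast
    show ?thesis
    proof (cases "v \<in> eig g 1")
      case True
      have "vec.span {v} \<subseteq> ?L0" using True eig_subspace vec.span_minimal by blast
      moreover have "vec.dim (vec.span {v}) = 1" using v(1) by simp
      ultimately have "vec.span {v} = ?L0"
        by (intro vec.subspace_dim_equal[OF vec.subspace_span eig_subspace]) (simp_all add: dimF1)
      thus ?thesis using v(2) by simp
    next
      case False
      hence "v \<in> eig g (-1)" using v(3) by blast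
      hence "vec.span {v} \<subseteq> eig g (-1)" using eig_subspace vec.span_minimal by blast
      thus ?thesis using v(2) by simp
    qed
  qed
  show ?thesis
  proof (intro exI[of _ ?L0] conjI)
    show "nondeg_subspace A ?L0" using ndeig[of 1] by simp
    show "vec.dim ?L0 = 1" by (rule dimF1)
    show "\<forall>v\<in>?L0. g *v v = v" by (simp add: eig_def)
    show "vec.dim (fixed_space g) = 1" by (simp add: fixed_eig dimF1)
    show "(\<forall>L. nondeg_subspace A L \<and> vec.dim L = 1 \<and> (\<lambda>v. g *v v) ` L = L \<longrightarrow> L = ?L0)
       \<or> (\<exists>U. nondeg_subspace A U \<and> vec.dim U = 2 \<and> (\<forall>u\<in>U. g *v u = - u)
            \<and> (\<forall>L. nondeg_subspace A L \<and> vec.dim L = 1 \<and> (\<lambda>v. g *v v) ` L = L \<longrightarrow> L = ?L0 \<or> L \<subseteq> U))"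
    proof (cases "card {i. d i = -1} = 0")
      case True
      hence "eig g (-1) \<subseteq> {0}" using dimFm1 by simp
      have "L = ?L0" if L: "nondeg_subspace A L" "vec.dim L = 1" "(\<lambda>v. g *v v) ` L = L" for L
      proof -
        have "L = ?L0 \<or> L \<subseteq> eig g (-1)" by (rule lines[OF L])
        moreover have "\<not> L \<subseteq> {0}" using L(2) by (metis vec.dim_eq_0 zero_neq_one)
        ultimately show ?thesis using \<open>eig g (-1) \<subseteq> {0}\<close> by blast
      qed
      thus ?thesis by blast
    next
      case False
      hence "card {i. d i = -1} = 2" using cm1 by (metis (no_types))
      hence two2: "vec.dim (eig g (-1)) = 2" using dimFm1 by simp
      have "nondeg_subspace A (eig g (-1))" using ndeig[of "-1"] by simp
      moreover have "\<forall>u\<in>eig g (-1). g *v u = - u" by (simp add: eig_def)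
      ultimately show ?thesis using two2 lines by blast
    qed
  qed
qed



end
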